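(* For every starting point $\mathbf{x}^{(0)}\in\Delta_n$, the trajectory $\mathbf{x}^{(t)}=g^t(\mathbf{x}^{(0)})$ converges as $t\to\infty$, and its limit is a fixed point of $g$.
   Context: $G=(V,E)$ is a finite undirected graph with $n$ vertices, $N_u$ the neighbourhood of $u$, $\Delta_n=\{\mathbf{x}\in\mathbb{R}^n_{\ge 0}:\sum_v\mathbf{x}_v=1\}$. For every edge $uv\in E$, $F_{uv}=F_{vu}:[-1,1]\to[-1,1]$ is continuously differentiable, $F_{uv}(0)=0$, increasing and odd. The map $g:\Delta_n\to\Delta_n$ is $g(\mathbf{x})_u=\mathbf{x}_u+\sum_{v\in N_u}\mathbf{x}_u\mathbf{x}_vF_{uv}(\mathbf{x}_u-\mathbf{x}_v)$; a fixed point is $\mathbf{p}$ with $g(\mathbf{p})=\mathbf{p}$. *)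

theory Defs
  imports "HOL-Analysis.Analysis"
begin

text \<open>Vertices are the elements of a finite type 'n (so n = CARD('n)); points of R^n are
  vectors of type real^'n. The graph is given by a symmetric edge relation E.\<close>

definition prob_simplex :: "(real ^ 'n::finite) set" where
  "prob_simplex = {x. (\<forall>v. 0 \<le> x $ v) \<and> (\<Sum>v\<in>UNIV. x $ v) = 1}"

definition nbhd :: "('n \<Rightarrow> 'n \<Rightarrow> bool) \<Rightarrow> 'n \<Rightarrow> 'n set" where
  "nbhd E u = {v. E u v}"

definition gmap :: "('n::finite \<Rightarrow> 'n \<Rightarrow> bool) \<Rightarrow> ('n \<Rightarrow> 'n \<Rightarrow> real \<Rightarrow> real)
                    \<Rightarrow> real ^ 'n \<Rightarrow> real ^ 'n" where
  "gmap E F x = (\<chi> u. x $ u + (\<Sum>v\<in>nbhd E u. x $ u * x $ v * F u v (x $ u - x $ v)))"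

text \<open>Continuously differentiable on the closed interval S (one-sided derivatives at the
  endpoints, i.e. derivatives taken within S).\<close>
definition C1_on_interval :: "(real \<Rightarrow> real) \<Rightarrow> real set \<Rightarrow> bool" where
  "C1_on_interval f S \<longleftrightarrow>
     (\<exists>D. (\<forall>t\<in>S. (f has_real_derivative D t) (at t within S)) \<and> continuous_on S D)"

end

theory Submission
  imports Defs
begin


lemma simplex_bounds:
  assumes "x \<in> prob_simplex" shows "0 \<le> x $ u" "x $ u \<le> 1"
proof -
  show "0 \<le> x $ u" using assms by (simp add: prob_simplex_def)
  have "x $ u \<le> (\<Sum>v\<in>UNIV. x $ v)"
    by (rule member_le_sum) (use assms in \<open>auto simp: prob_simplex_def\<close>)
  then show "x $ u \<le> 1" using assms by (simp add: prob_simplex_def)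
qed

locale dyn =
  fixes E :: "'n::finite \<Rightarrow> 'n \<Rightarrow> bool"
    and F :: "'n \<Rightarrow> 'n \<Rightarrow> real \<Rightarrow> real"
  assumes undirected: "\<And>u v. E u v \<Longrightarrow> E v u"
    and F_sym: "\<And>u v. E u v \<Longrightarrow> F u v = F v u"
    and F_range: "\<And>u v t. E u v \<Longrightarrow> t \<in> {-1..1} \<Longrightarrow> F u v t \<in> {-1..1}"
    and F_C1: "\<And>u v. E u v \<Longrightarrow> C1_on_interval (F u v) {-1..1}"
    and F_zero: "\<And>u v. E u v \<Longrightarrow> F u v 0 = 0"
    and F_incr: "\<And>u v. E u v \<Longrightarrow> strict_mono_on {-1..1} (F u v)"
    and F_odd: "\<And>u v t. E u v \<Longrightarrow> t \<in> {-1..1} \<Longrightarrow> F u v (- t) = - F u v t"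
begin

definition ff :: "real^'n \<Rightarrow> 'n \<Rightarrow> 'n \<Rightarrow> real" where
  "ff x u v = x $ u * x $ v * F u v (x $ u - x $ v)"

lemma diff_range: "x \<in> prob_simplex \<Longrightarrow> x $ u - x $ v \<in> {-1..1}"
  using simplex_bounds[of x u] simplex_bounds[of x v] by auto

lemma ff_anti: "x \<in> prob_simplex \<Longrightarrow> E u v \<Longrightarrow> ff x v u = - ff x u v"
proof -
  assume x: "x \<in> prob_simplex" and e: "E u v"
  have "F v u (x $ v - x $ u) = F u v (- (x $ u - x $ v))" using F_sym[OF e] by simp
  also have "\<dots> = - F u v (x $ u - x $ v)" using F_odd[OF e diff_range[OF x]] .
  finally show ?thesis by (simp add: ff_def)
qed

lemma term_nonneg:
  assumes x: "x \<in> prob_simplex" and e: "E u v"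
    and m1: "x $ v < x $ u \<Longrightarrow> s v \<le> s u" and m2: "x $ u < x $ v \<Longrightarrow> s u \<le> s v"
  shows "0 \<le> (s u - s v) * ff x u v"
proof -
  have p: "0 \<le> x $ u * x $ v" using simplex_bounds[OF x] by simp
  have r: "x $ u - x $ v \<in> {-1..1}" using diff_range[OF x] .
  have z: "(0::real) \<in> {-1..1}" by simp
  consider "x $ v < x $ u" | "x $ u < x $ v" | "x $ u = x $ v" by linarith
  then show ?thesis
  proof cases
    case 1
    have "F u v 0 < F u v (x $ u - x $ v)"
      using strict_mono_onD[OF F_incr[OF e] z r] 1 by simp
    then have "0 \<le> F u v (x $ u - x $ v)" using F_zero[OF e] by simp
    then show ?thesis using m1[OF 1] p unfolding ff_def by simp
  next
    case 2
    have "F u v (x $ u - x $ v) < F u v 0"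
      using strict_mono_onD[OF F_incr[OF e] r z] 2 by simp
    then have "F u v (x $ u - x $ v) \<le> 0" using F_zero[OF e] by simp
    moreover have "0 \<le> (s v - s u) * (x $ u * x $ v)" using m2[OF 2] p by simp
    ultimately have "(s v - s u) * (x $ u * x $ v) * F u v (x $ u - x $ v) \<le> 0"
      by (intro mult_nonneg_nonpos)
    then have "0 \<le> (s v - s u) * (x $ u * x $ v) * (- F u v (x $ u - x $ v))"
      by simp
    then show ?thesis unfolding ff_def by (simp add: algebra_simps)
  next
    case 3
    then show ?thesis using F_zero[OF e] by (simp add: ff_def)
  qed
qed

lemma key:
  assumes x: "x \<in> prob_simplex" and mono: "\<And>u v. x $ v < x $ u \<Longrightarrow> s v \<le> s u"
  shows "0 \<le> (\<Sum>u\<in>UNIV. s u * (\<Sum>v\<in>nbhd E u. ff x u v))"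
proof -
  define h where "h u v = (if E u v then s u * ff x u v else 0)" for u v
  have S: "(\<Sum>u\<in>UNIV. s u * (\<Sum>v\<in>nbhd E u. ff x u v)) = (\<Sum>u\<in>UNIV. \<Sum>v\<in>UNIV. h u v)"
  proof (rule sum.cong[OF refl])
    fix u
    have "(\<Sum>v\<in>UNIV. h u v) = (\<Sum>v\<in>{v \<in> UNIV. E u v}. s u * ff x u v)"
      unfolding h_def by (rule sum.inter_filter[symmetric]) simp
    also have "{v \<in> UNIV. E u v} = nbhd E u" by (simp add: nbhd_def)
    finally show "s u * (\<Sum>v\<in>nbhd E u. ff x u v) = (\<Sum>v\<in>UNIV. h u v)"
      by (simp add: sum_distrib_left)
  qed
  have sw: "(\<Sum>u\<in>UNIV. \<Sum>v\<in>UNIV. h u v) = (\<Sum>u\<in>UNIV. \<Sum>v\<in>UNIV. h v u)"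
    by (rule sum.swap)
  have hv: "h v u = (if E u v then - s v * ff x u v else 0)" for u v
  proof (cases "E u v")
    case True
    then show ?thesis using ff_anti[OF x True] undirected[OF True] by (simp add: h_def)
  next
    case False
    then have "\<not> E v u" using undirected by blast
    then show ?thesis using False by (simp add: h_def)
  qed
  have "2 * (\<Sum>u\<in>UNIV. \<Sum>v\<in>UNIV. h u v)
      = (\<Sum>u\<in>UNIV. \<Sum>v\<in>UNIV. h u v) + (\<Sum>u\<in>UNIV. \<Sum>v\<in>UNIV. h v u)" using sw by simp
  also have "\<dots> = (\<Sum>u\<in>UNIV. \<Sum>v\<in>UNIV. h u v + h v u)"
    by (simp add: sum.distrib)
  also have "\<dots> = (\<Sum>u\<in>UNIV. \<Sum>v\<in>UNIV. if E u v then (s u - s v) * ff x u v else 0)"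
  proof (intro sum.cong refl)
    fix u v
    show "h u v + h v u = (if E u v then (s u - s v) * ff x u v else 0)"
    proof (cases "E u v")
      case True
      then show ?thesis using ff_anti[OF x True] undirected[OF True]
        by (simp add: h_def algebra_simps)
    next
      case False
      then have "\<not> E v u" using undirected by blast
      then show ?thesis using False by (simp add: h_def)
    qed
  qed
  also have "\<dots> \<ge> 0"
    by (intro sum_nonneg) (auto intro!: term_nonneg[OF x] mono)
  finally show ?thesis using S by simp
qed

lemma gmap_nth: "gmap E F x $ u = x $ u + (\<Sum>v\<in>nbhd E u. ff x u v)"
  by (simp add: gmap_def ff_def)

lemma sum_ff_zero: "x \<in> prob_simplex \<Longrightarrow> (\<Sum>u\<in>UNIV. \<Sum>v\<in>nbhd E u. ff x u v) = 0"
  using key[of x "\<lambda>_. 1"] key[of x "\<lambda>_. -1"] by (simp add: sum_negf)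

lemma gmap_nonneg:
  assumes x: "x \<in> prob_simplex" shows "0 \<le> gmap E F x $ u"
proof -
  define k where "k v = (if v = u then 0 else x $ u * x $ v)" for v
  have k0: "0 \<le> k v" for v using simplex_bounds[OF x] by (simp add: k_def)
  have t: "- k v \<le> ff x u v" if "v \<in> nbhd E u" for v
  proof -
    have e: "E u v" using that by (simp add: nbhd_def)
    show ?thesis
    proof (cases "v = u")
      case True then show ?thesis using F_zero[OF e] by (simp add: k_def ff_def)
    next
      case False
      have "F u v (x $ u - x $ v) \<ge> -1" using F_range[OF e diff_range[OF x]] by simp
      moreover have "0 \<le> x $ u * x $ v" using simplex_bounds[OF x] by simp
      ultimately have "x $ u * x $ v * (-1) \<le> x $ u * x $ v * F u v (x $ u - x $ v)"
        by (intro mult_left_mono)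
      then show ?thesis using False by (simp add: k_def ff_def)
    qed
  qed
  have "(\<Sum>v\<in>nbhd E u. - k v) \<le> (\<Sum>v\<in>nbhd E u. ff x u v)"
    by (rule sum_mono) (rule t)
  moreover have "(\<Sum>v\<in>nbhd E u. k v) \<le> (\<Sum>v\<in>UNIV. k v)"
    by (rule sum_mono2) (auto simp: k0)
  moreover have "(\<Sum>v\<in>UNIV. k v) = x $ u * (\<Sum>v\<in>UNIV. x $ v) - x $ u * x $ u"
  proof -
    have "(\<Sum>v\<in>UNIV. k v) = (\<Sum>v\<in>UNIV. x $ u * x $ v - (if v = u then x $ u * x $ v else 0))"
      by (intro sum.cong) (auto simp: k_def)
    also have "\<dots> = x $ u * (\<Sum>v\<in>UNIV. x $ v) - x $ u * x $ u"
      by (simp add: sum_subtractf sum_distrib_left)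
    finally show ?thesis .
  qed
  moreover have "(\<Sum>v\<in>UNIV. x $ v) = 1" using x by (simp add: prob_simplex_def)
  ultimately have "x $ u * x $ u \<le> gmap E F x $ u"
    by (simp add: gmap_nth sum_negf)
  then show ?thesis by (smt (verit) zero_le_square)
qed

lemma gmap_simplex: "x \<in> prob_simplex \<Longrightarrow> gmap E F x \<in> prob_simplex"
proof -
  assume x: "x \<in> prob_simplex"
  have "(\<Sum>u\<in>UNIV. gmap E F x $ u) = (\<Sum>u\<in>UNIV. x $ u) + (\<Sum>u\<in>UNIV. \<Sum>v\<in>nbhd E u. ff x u v)"
    by (simp add: gmap_nth sum.distrib)
  then show ?thesis using x gmap_nonneg[OF x] sum_ff_zero[OF x] by (simp add: prob_simplex_def)
qed

lemma hinge_mono: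
  assumes x: "x \<in> prob_simplex"
  shows "(\<Sum>u\<in>UNIV. max (x $ u - c) 0) \<le> (\<Sum>u\<in>UNIV. max (gmap E F x $ u - c) 0)"
proof -
  define s where "s u = (if c < x $ u then 1 else (0::real))" for u
  have "0 \<le> (\<Sum>u\<in>UNIV. s u * (\<Sum>v\<in>nbhd E u. ff x u v))"
    by (rule key[OF x]) (auto simp: s_def)
  moreover have "max (x $ u - c) 0 + s u * (\<Sum>v\<in>nbhd E u. ff x u v) \<le> max (gmap E F x $ u - c) 0" for u
    by (auto simp: s_def gmap_nth)
  then have "(\<Sum>u\<in>UNIV. max (x $ u - c) 0 + s u * (\<Sum>v\<in>nbhd E u. ff x u v))
      \<le> (\<Sum>u\<in>UNIV. max (gmap E F x $ u - c) 0)" by (rule sum_mono)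
  ultimately show ?thesis by (simp add: sum.distrib)
qed

lemma sq_mono:
  assumes x: "x \<in> prob_simplex"
  shows "(\<Sum>u\<in>UNIV. (x $ u)^2) + (gmap E F x $ w - x $ w)^2 \<le> (\<Sum>u\<in>UNIV. (gmap E F x $ u)^2)"
proof -
  define d where "d u = (\<Sum>v\<in>nbhd E u. ff x u v)" for u
  have 0: "0 \<le> (\<Sum>u\<in>UNIV. x $ u * d u)"
    unfolding d_def by (rule key[OF x]) auto
  have 1: "(d w)^2 \<le> (\<Sum>u\<in>UNIV. (d u)^2)"
    by (rule member_le_sum) auto
  have "(\<Sum>u\<in>UNIV. (gmap E F x $ u)^2) = (\<Sum>u\<in>UNIV. (x $ u)^2 + 2 * (x $ u * d u) + (d u)^2)"
    by (intro sum.cong) (auto simp: gmap_nth d_def power2_eq_square algebra_simps)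
  also have "\<dots> = (\<Sum>u\<in>UNIV. (x $ u)^2) + 2 * (\<Sum>u\<in>UNIV. x $ u * d u) + (\<Sum>u\<in>UNIV. (d u)^2)"
    by (simp add: sum.distrib sum_distrib_left)
  finally show ?thesis using 0 1 by (simp add: gmap_nth d_def)
qed

end


lemma crossing:
  fixes y :: "nat \<Rightarrow> real"
  assumes ab: "a \<le> c" "c \<le> b"
    and fa: "\<exists>\<^sub>F t in sequentially. y t < a"
    and fb: "\<exists>\<^sub>F t in sequentially. y t > b"
    and st: "eventually (\<lambda>t. \<bar>y (Suc t) - y t\<bar> < \<theta>) sequentially"
  shows "\<exists>\<^sub>F t in sequentially. \<bar>y t - c\<bar> < \<theta>"
proof (rule ccontr)
  assume "\<not> ?thesis"
  then have "eventually (\<lambda>t. \<not> \<bar>y t - c\<bar> < \<theta>) sequentially"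
    by (simp add: frequently_def)
  with st have "eventually (\<lambda>t. \<not> \<bar>y t - c\<bar> < \<theta> \<and> \<bar>y (Suc t) - y t\<bar> < \<theta>) sequentially"
    by (simp add: eventually_conj)
  then obtain M where M: "\<And>t. t \<ge> M \<Longrightarrow> \<not> \<bar>y t - c\<bar> < \<theta> \<and> \<bar>y (Suc t) - y t\<bar> < \<theta>"
    by (auto simp: eventually_sequentially)
  obtain t1 where t1: "t1 \<ge> M" "y t1 < a" using fa by (auto simp: frequently_sequentially)
  obtain t2 where t2: "t2 \<ge> t1" "y t2 > b" using fb by (auto simp: frequently_sequentially)
  have "y (t1 + k) < c" for k
  proof (induction k)
    case 0 then show ?case using t1 ab by simp
  next
    case (Suc k)
    have "\<not> \<bar>y (Suc (t1 + k)) - c\<bar> < \<theta>" "\<bar>y (Suc (t1 + k)) - y (t1 + k)\<bar> < \<theta>"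
      using M[of "Suc (t1 + k)"] M[of "t1 + k"] t1 by auto
    then show ?case using Suc by auto
  qed
  from this[of "t2 - t1"] t2 ab show False by simp
qed

lemma conv_crit:
  fixes y :: "nat \<Rightarrow> real"
  assumes bd: "\<And>t. 0 \<le> y t \<and> y t \<le> 1"
    and no: "\<And>a b. a < b \<Longrightarrow> (\<exists>\<^sub>F t in sequentially. y t < a) \<Longrightarrow> (\<exists>\<^sub>F t in sequentially. y t > b) \<Longrightarrow> False"
  shows "\<exists>l. y \<longlonglongrightarrow> l"
proof -
  define Y where "Y t = ereal (y t)" for t
  define li where "li = Liminf sequentially Y"
  define ls where "ls = Limsup sequentially Y"
  have "li \<le> ls" unfolding li_def ls_def by (rule Liminf_le_Limsup) simp
  moreover have "\<not> li < ls"
  proof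
    assume "li < ls"
    then obtain a where a: "li < ereal a" "ereal a < ls" using ereal_dense2 by blast
    then obtain b where b: "ereal a < ereal b" "ereal b < ls" using ereal_dense2 by blast
    have "\<not> ereal a \<le> li" using a by simp
    then obtain r where r: "r < ereal a" "\<not> eventually (\<lambda>t. r < Y t) sequentially"
      unfolding li_def le_Liminf_iff by auto
    have fa: "\<exists>\<^sub>F t in sequentially. y t < a"
    proof -
      have "\<exists>\<^sub>F t in sequentially. \<not> r < Y t" using r(2) by (simp add: frequently_def)
      then show ?thesis
      proof (rule frequently_elim1)
        fix t assume "\<not> r < Y t"
        then have "Y t < ereal a" using r(1) by (meson not_less le_less_trans)
        then show "y t < a" by (simp add: Y_def)
      qed
    qed
    have "\<not> ls \<le> ereal b" using b by simp
    then obtain r' where r': "r' > ereal b" "\<not> eventually (\<lambda>t. r' > Y t) sequentially"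
      unfolding ls_def Limsup_le_iff by auto
    have fb: "\<exists>\<^sub>F t in sequentially. y t > b"
    proof -
      have "\<exists>\<^sub>F t in sequentially. \<not> r' > Y t" using r'(2) by (simp add: frequently_def)
      then show ?thesis
      proof (rule frequently_elim1)
        fix t assume "\<not> r' > Y t"
        then have "ereal b < Y t" using r'(1) by (meson not_less less_le_trans)
        then show "y t > b" by (simp add: Y_def)
      qed
    qed
    show False using no[OF _ fa fb] b by simp
  qed
  ultimately have eq: "li = ls" by simp
  have "Y \<longlonglongrightarrow> li"
    by (rule Liminf_eq_Limsup) (use eq in \<open>auto simp: li_def ls_def\<close>)
  moreover have "ereal 0 \<le> li" unfolding li_def
    by (rule Liminf_bounded) (auto simp: Y_def bd)
  moreover have "li \<le> ereal 1" unfolding eq ls_def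
    by (rule Limsup_bounded) (auto simp: Y_def bd)
  ultimately obtain l where "li = ereal l" "Y \<longlonglongrightarrow> ereal l"
    by (cases li) auto
  then have "(\<lambda>t. ereal (y t)) \<longlonglongrightarrow> ereal l" by (simp add: Y_def[abs_def])
  then have "y \<longlonglongrightarrow> l" by simp
  then show ?thesis by blast
qed



lemma tent_eq:
  fixes s c \<eta> :: real
  assumes "\<eta> > 0"
  shows "max 0 (\<eta> - \<bar>s - c\<bar>) = max (s - (c - \<eta>)) 0 - 2 * max (s - c) 0 + max (s - (c + \<eta>)) 0"
  using assms by (auto simp: max_def abs_if)

lemma tent_sum_le:
  fixes s a \<eta> :: real
  assumes eta: "\<eta> > 0"
  shows "(\<Sum>i\<in>{0..N}. max 0 (\<eta> - \<bar>s - (a + real i * (2 * \<eta>))\<bar>)) \<le> \<eta>"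
proof -
  define f where "f i = max 0 (\<eta> - \<bar>s - (a + real i * (2 * \<eta>))\<bar>)" for i
  define S where "S = {i\<in>{0..N}. \<bar>s - (a + real i * (2 * \<eta>))\<bar> < \<eta>}"
  have "sum f {0..N} = sum f S"
    by (rule sum.mono_neutral_right) (auto simp: S_def f_def)
  also have "\<dots> \<le> real (card S) * \<eta>"
    by (rule sum_bounded_above) (use eta in \<open>auto simp: f_def\<close>)
  also have "card S \<le> 1"
  proof -
    have "finite S" by (simp add: S_def)
    moreover have "\<forall>i\<in>S. \<forall>j\<in>S. i = j"
    proof (intro ballI)
      fix i j assume "i \<in> S" "j \<in> S"
      then have "\<bar>real i * (2 * \<eta>) - real j * (2 * \<eta>)\<bar> < 2 * \<eta>" by (auto simp: S_def)
      then have "\<bar>real i - real j\<bar> * (2 * \<eta>) < 1 * (2 * \<eta>)"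
        using eta by (simp only: left_diff_distrib[symmetric] abs_mult)
      then have "\<bar>real i - real j\<bar> < 1" by (rule mult_right_less_imp_less) (use eta in simp)
      then show "i = j" by linarith
    qed
    ultimately show ?thesis using card_le_Suc0_iff_eq by auto
  qed
  then have "real (card S) * \<eta> \<le> 1 * \<eta>" using eta by (intro mult_right_mono) auto
  finally show ?thesis unfolding f_def by simp
qed

lemma limit_ge_freq:
  fixes T :: "nat \<Rightarrow> real"
  assumes "T \<longlonglongrightarrow> \<tau>" "\<exists>\<^sub>F t in sequentially. \<beta> \<le> T t"
  shows "\<beta> \<le> \<tau>"
proof (rule ccontr)
  assume "\<not> \<beta> \<le> \<tau>"
  then have "eventually (\<lambda>t. T t < \<beta>) sequentially" using order_tendstoD(2)[OF assms(1)] by simp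
  then have "eventually (\<lambda>t. \<not> \<beta> \<le> T t) sequentially" by (rule eventually_mono) simp
  then show False using assms(2) by (simp add: frequently_def)
qed

lemma tent_contra:
  fixes z :: "nat \<Rightarrow> real ^ 'n::finite"
  assumes conv: "\<And>c. \<exists>L. (\<lambda>t. \<Sum>w\<in>UNIV. max (z t $ w - c) 0) \<longlonglongrightarrow> L"
    and ab: "a < b"
    and near: "\<And>c \<theta>. a \<le> c \<Longrightarrow> c \<le> b \<Longrightarrow> \<theta> > 0 \<Longrightarrow> \<exists>\<^sub>F t in sequentially. \<bar>z t $ u - c\<bar> < \<theta>"
  shows False
proof -
  define N where "N = CARD('n)"
  have N1: "N \<ge> 1" unfolding N_def by (simp add: Suc_le_eq)
  define \<eta> where "\<eta> = (b - a) / (2 * real N)"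
  have eta: "\<eta> > 0" using ab N1 by (simp add: \<eta>_def)
  define \<theta> where "\<theta> = \<eta> / (real N + 2)"
  have th: "\<theta> > 0" using eta by (simp add: \<theta>_def)
  define c where "c i = a + real i * (2 * \<eta>)" for i :: nat
  have cab: "a \<le> c i \<and> c i \<le> b" if "i \<le> N" for i
  proof -
    have "real i * (2 * \<eta>) \<le> real N * (2 * \<eta>)" using that eta by (intro mult_right_mono) auto
    also have "real N * (2 * \<eta>) = b - a" using N1 by (simp add: \<eta>_def)
    finally show ?thesis using eta by (simp add: c_def)
  qed
  define tent where "tent d s = max 0 (\<eta> - \<bar>s - d\<bar>)" for d s :: real
  define T where "T d t = (\<Sum>w\<in>UNIV. tent d (z t $ w))" for d t
  define A where "A d t = (\<Sum>w\<in>UNIV. max (z t $ w - d) 0)" for d t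
  have TA: "T d t = A (d - \<eta>) t - 2 * A d t + A (d + \<eta>) t" for d t
    unfolding T_def A_def tent_def tent_eq[OF eta]
    by (simp add: sum.distrib sum_subtractf sum_distrib_left)
  obtain L where L: "\<And>d. A d \<longlonglongrightarrow> L d" using conv unfolding A_def by metis
  define \<tau> where "\<tau> d = L (d - \<eta>) - 2 * L d + L (d + \<eta>)" for d
  have Tlim: "T d \<longlonglongrightarrow> \<tau> d" for d
    unfolding TA[abs_def] \<tau>_def by (intro tendsto_intros L)
  have lo: "\<eta> - \<theta> \<le> \<tau> (c i)" if "i \<le> N" for i
  proof (rule limit_ge_freq[OF Tlim])
    have "\<exists>\<^sub>F t in sequentially. \<bar>z t $ u - c i\<bar> < \<theta>" using near cab[OF that] th by blast
    then show "\<exists>\<^sub>F t in sequentially. \<eta> - \<theta> \<le> T (c i) t"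
    proof (rule frequently_elim1)
      fix t assume "\<bar>z t $ u - c i\<bar> < \<theta>"
      then have "\<eta> - \<theta> \<le> tent (c i) (z t $ u)" by (simp add: tent_def)
      also have "\<dots> \<le> T (c i) t" unfolding T_def
        by (rule member_le_sum) (auto simp: tent_def)
      finally show "\<eta> - \<theta> \<le> T (c i) t" .
    qed
  qed
  have up: "(\<Sum>i\<in>{0..N}. T (c i) t) \<le> real N * \<eta>" for t
  proof -
    have "(\<Sum>i\<in>{0..N}. T (c i) t) = (\<Sum>w\<in>UNIV. \<Sum>i\<in>{0..N}. tent (c i) (z t $ w))"
      unfolding T_def by (rule sum.swap)
    also have "\<dots> \<le> (\<Sum>w\<in>(UNIV::'n set). \<eta>)"
      by (rule sum_mono) (simp add: tent_def c_def tent_sum_le[OF eta])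
    also have "\<dots> = real N * \<eta>" by (simp add: N_def)
    finally show ?thesis .
  qed
  have "(\<lambda>t. \<Sum>i\<in>{0..N}. T (c i) t) \<longlonglongrightarrow> (\<Sum>i\<in>{0..N}. \<tau> (c i))"
    by (intro tendsto_sum Tlim)
  then have "(\<Sum>i\<in>{0..N}. \<tau> (c i)) \<le> real N * \<eta>"
    by (rule tendsto_le[OF sequentially_bot tendsto_const]) (simp add: up)
  moreover have "(\<Sum>i\<in>{0..N}. \<eta> - \<theta>) \<le> (\<Sum>i\<in>{0..N}. \<tau> (c i))"
    by (rule sum_mono) (simp add: lo)
  moreover have "(\<Sum>i\<in>{0..N}. \<eta> - \<theta>) = (real N + 1) * (\<eta> - \<theta>)" by simp
  moreover have "(real N + 1) * \<theta> < \<eta>"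
    using eta by (simp add: \<theta>_def field_simps)
  ultimately show False by (simp add: algebra_simps)
qed



context dyn begin

lemma F_cont: "E u v \<Longrightarrow> continuous_on {-1..1} (F u v)"
  using F_C1[of u v] unfolding C1_on_interval_def
  by (auto intro: DERIV_continuous_on)

lemma main:
  assumes x0: "x0 \<in> prob_simplex"
  shows "\<exists>p. ((\<lambda>t. (gmap E F ^^ t) x0) \<longlongrightarrow> p) sequentially \<and> gmap E F p = p"
proof -
  define z where "z t = (gmap E F ^^ t) x0" for t
  have zSuc: "z (Suc t) = gmap E F (z t)" for t by (simp add: z_def)
  have zS: "z t \<in> prob_simplex" for t
    by (induction t) (auto simp: zSuc x0 gmap_simplex, simp add: z_def x0)
  have conv: "\<exists>L. (\<lambda>t. \<Sum>w\<in>UNIV. max (z t $ w - c) 0) \<longlonglongrightarrow> L" for c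
  proof -
    have "incseq (\<lambda>t. \<Sum>w\<in>UNIV. max (z t $ w - c) 0)"
      by (rule incseq_SucI) (simp add: zSuc hinge_mono[OF zS])
    moreover have "bdd_above (range (\<lambda>t. \<Sum>w\<in>UNIV. max (z t $ w - c) 0))"
    proof (rule bdd_aboveI2)
      fix t
      have "(\<Sum>w\<in>UNIV. max (z t $ w - c) 0) \<le> (\<Sum>w\<in>(UNIV::'n set). 1 + \<bar>c\<bar>)"
      proof (rule sum_mono)
        fix w
        have "z t $ w \<le> 1" by (rule simplex_bounds(2)[OF zS])
        then show "max (z t $ w - c) 0 \<le> 1 + \<bar>c\<bar>" by (simp add: max_def abs_if)
      qed
      then show "(\<Sum>w\<in>UNIV. max (z t $ w - c) 0) \<le> real CARD('n) * (1 + \<bar>c\<bar>)" by simp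
    qed
    ultimately show ?thesis using LIMSEQ_incseq_SUP by blast
  qed
  define \<Phi> where "\<Phi> t = (\<Sum>u\<in>UNIV. (z t $ u)^2)" for t
  have \<Phi>step: "(z (Suc t) $ w - z t $ w)^2 \<le> \<Phi> (Suc t) - \<Phi> t" for t w
    using sq_mono[OF zS, of t w] by (simp add: \<Phi>_def zSuc)
  obtain L\<Phi> where L\<Phi>: "\<Phi> \<longlonglongrightarrow> L\<Phi>"
  proof -
    have "incseq \<Phi>"
      by (rule incseq_SucI) (use \<Phi>step[of _ undefined] in \<open>smt (verit) zero_le_power2\<close>)
    moreover have "bdd_above (range \<Phi>)"
    proof (rule bdd_aboveI2)
      fix t
      have "\<Phi> t \<le> (\<Sum>w\<in>(UNIV::'n set). 1)" unfolding \<Phi>_def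
        by (rule sum_mono) (use simplex_bounds[OF zS] in \<open>auto simp: power_le_one\<close>)
      then show "\<Phi> t \<le> real CARD('n)" by simp
    qed
    ultimately show ?thesis using LIMSEQ_incseq_SUP that by blast
  qed
  have d0: "(\<lambda>t. \<Phi> (Suc t) - \<Phi> t) \<longlonglongrightarrow> 0"
    using tendsto_diff[OF LIMSEQ_Suc[OF L\<Phi>] L\<Phi>] by simp
  have step: "eventually (\<lambda>t. \<bar>z (Suc t) $ w - z t $ w\<bar> < \<theta>) sequentially" if th: "\<theta> > 0" for \<theta> w
  proof -
    have "eventually (\<lambda>t. \<Phi> (Suc t) - \<Phi> t < \<theta>^2) sequentially"
      using order_tendstoD(2)[OF d0] th by simp
    then show ?thesis
    proof (rule eventually_mono)
      fix t assume "\<Phi> (Suc t) - \<Phi> t < \<theta>^2"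
      then have "\<bar>z (Suc t) $ w - z t $ w\<bar>^2 < \<theta>^2" using \<Phi>step[of t w] by simp
      then show "\<bar>z (Suc t) $ w - z t $ w\<bar> < \<theta>"
        by (rule power_less_imp_less_base) (use th in simp)
    qed
  qed
  have coord: "\<exists>l. (\<lambda>t. z t $ u) \<longlonglongrightarrow> l" for u
  proof (rule conv_crit)
    show "0 \<le> z t $ u \<and> z t $ u \<le> 1" for t using simplex_bounds[OF zS] by auto
  next
    fix a b assume ab: "a < b"
      and fa: "\<exists>\<^sub>F t in sequentially. z t $ u < a" and fb: "\<exists>\<^sub>F t in sequentially. z t $ u > b"
    show False
    proof (rule tent_contra[OF conv ab])
      fix c \<theta> :: real assume "a \<le> c" "c \<le> b" "\<theta> > 0"
      then show "\<exists>\<^sub>F t in sequentially. \<bar>z t $ u - c\<bar> < \<theta>"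
        using crossing[OF _ _ fa fb step] by blast
    qed
  qed
  then obtain l where l: "\<And>u. (\<lambda>t. z t $ u) \<longlonglongrightarrow> l u" by metis
  define p where "p = (\<chi> u. l u)"
  have zp: "z \<longlonglongrightarrow> p" by (rule vec_tendstoI) (simp add: p_def l)
  have pb: "0 \<le> p $ u \<and> p $ u \<le> 1" for u
  proof -
    have "(\<lambda>t. z t $ u) \<longlonglongrightarrow> p $ u" by (simp add: p_def l)
    moreover have "0 \<le> z t $ u \<and> z t $ u \<le> 1" for t using simplex_bounds[OF zS] by auto
    ultimately show ?thesis
      by (metis LIMSEQ_le_const LIMSEQ_le_const2)
  qed
  have fix_: "gmap E F p $ u = p $ u" for u
  proof -
    have zu: "(\<lambda>t. z t $ w) \<longlonglongrightarrow> p $ w" for w by (simp add: p_def l)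
    have Fl: "(\<lambda>t. F u v (z t $ u - z t $ v)) \<longlonglongrightarrow> F u v (p $ u - p $ v)" if "v \<in> nbhd E u" for v
    proof (rule continuous_on_tendsto_compose[OF F_cont])
      show "E u v" using that by (simp add: nbhd_def)
      show "(\<lambda>t. z t $ u - z t $ v) \<longlonglongrightarrow> p $ u - p $ v" by (intro tendsto_intros zu)
      show "p $ u - p $ v \<in> {-1..1}" using pb[of u] pb[of v] by auto
      show "\<forall>\<^sub>F t in sequentially. z t $ u - z t $ v \<in> {- 1..1}"
        using diff_range[OF zS] by simp
    qed
    have "(\<lambda>t. gmap E F (z t) $ u) \<longlonglongrightarrow> gmap E F p $ u"
      unfolding gmap_def vec_lambda_beta
      by (intro tendsto_intros zu tendsto_sum Fl)
    moreover have "(\<lambda>t. gmap E F (z t) $ u) \<longlonglongrightarrow> p $ u"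
      unfolding zSuc[symmetric] using LIMSEQ_Suc[OF zu[of u]] .
    ultimately show ?thesis using LIMSEQ_unique by blast
  qed
  show ?thesis
    using zp fix_ unfolding z_def[abs_def] by (auto simp: vec_eq_iff)
qed

end

theorem mainTheorem4:
  fixes E :: "'n::finite \<Rightarrow> 'n \<Rightarrow> bool"
    and F :: "'n \<Rightarrow> 'n \<Rightarrow> real \<Rightarrow> real"
    and x0 :: "real ^ 'n"
  assumes undirected: "\<And>u v. E u v \<Longrightarrow> E v u"
    and F_sym: "\<And>u v. E u v \<Longrightarrow> F u v = F v u"
    and F_range: "\<And>u v t. E u v \<Longrightarrow> t \<in> {-1..1} \<Longrightarrow> F u v t \<in> {-1..1}"
    and F_C1: "\<And>u v. E u v \<Longrightarrow> C1_on_interval (F u v) {-1..1}"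
    and F_zero: "\<And>u v. E u v \<Longrightarrow> F u v 0 = 0"
    and F_incr: "\<And>u v. E u v \<Longrightarrow> strict_mono_on {-1..1} (F u v)"
    and F_odd: "\<And>u v t. E u v \<Longrightarrow> t \<in> {-1..1} \<Longrightarrow> F u v (- t) = - F u v t"
    and x0: "x0 \<in> prob_simplex"
  shows "\<exists>p. ((\<lambda>t. (gmap E F ^^ t) x0) \<longlongrightarrow> p) sequentially \<and> gmap E F p = p"
  proof -
  have "dyn E F" unfolding dyn_def using undirected F_sym F_range F_C1 F_zero F_incr F_odd by blast
  then show ?thesis using dyn.main x0 by blast
qed

end
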